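(* Let $d\ge1$, $\delta>0$, and let $\varphi$ be a random vector in $\mathbb{S}^{d-1}$ for which there exist constants $\alpha\ge1$ and $s>0$ with $$\Pr\big(|\langle x,\varphi\rangle|\le t\big)\le\alpha t^s\quad\text{for all }0\le t\le1\text{ and all }x\in\mathbb{S}^{d-1}.$$ Let $\varphi_1,\dots,\varphi_N$ be i.i.d. copies of $\varphi$, and $\epsilon_1,\dots,\epsilon_N$ i.i.d. uniform on $[-\delta,\delta]$, independent of the $\varphi_n$. Let $P_N=\bigcap_{n=1}^N\{u\in\mathbb{R}^d:|\langle u,\varphi_n\rangle-\epsilon_n|\le\delta\}$ and $W_N=\sup\{\|u\|:u\in P_N\}$. Then for all $N\ge(d+2)/s$, $$\mathbb{E}|W_N|^2\le\frac{10^5\delta^2d^2(2\alpha)^{2/s}\ln^2\!\big(16(2\alpha)^{1/s}\big)}{(N+1)(N+2)}+\delta^2\,32^{d+1}(2\alpha)^{(d+1)/s}\Big(\frac12\Big)^N.$$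
   Context: $W_N$ is the worst case error of consistent reconstruction: for any $x\in\mathbb{R}^d$ with measurements $q_n=\langle x,\varphi_n\rangle+\epsilon_n$, every $\tilde x$ satisfying $|\langle\tilde x,\varphi_n\rangle-q_n|\le\delta$ for all $n$ has $\|x-\tilde x\|\le W_N$, and $W_N$ is the supremum of such errors. *)

theory Defs
  imports "HOL-Probability.Probability"
begin

definition cr_polytope :: "nat \<Rightarrow> real \<Rightarrow> (nat \<Rightarrow> 'a::euclidean_space) \<Rightarrow> (nat \<Rightarrow> real) \<Rightarrow> 'a set" where
  "cr_polytope N \<delta> \<phi> \<epsilon> = {u. \<forall>n<N. \<bar>inner u (\<phi> n) - \<epsilon> n\<bar> \<le> \<delta>}"

text \<open>Worst case error W_N = sup of norms over P_N, valued in [0,\<infinity>] (so unbounded P_N gives \<infinity>).\<close>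
definition worst_case_error :: "nat \<Rightarrow> real \<Rightarrow> (nat \<Rightarrow> 'a::euclidean_space) \<Rightarrow> (nat \<Rightarrow> real) \<Rightarrow> ennreal" where
  "worst_case_error N \<delta> \<phi> \<epsilon> = (SUP u\<in>cr_polytope N \<delta> \<phi> \<epsilon>. ennreal (norm u))"

definition cr_joint :: "'a::euclidean_space measure \<Rightarrow> real \<Rightarrow> nat \<Rightarrow> (nat \<Rightarrow> 'a \<times> real) measure" where
  "cr_joint \<mu> \<delta> N = PiM {..<N} (\<lambda>_. \<mu> \<Otimes>\<^sub>M uniform_measure lborel {-\<delta>..\<delta>})"

end

theory Submission
  imports Defs
begin
lemma pow_diff_le:
  fixes a b :: real
  assumes "0 \<le> b" "b \<le> a"
  shows "a^n - b^n \<le> real n * (a - b) * a^(n-1)"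
proof (induction n)
  case 0 then show ?case by simp
next
  case (Suc n)
  have "a^Suc n - b^Suc n = a*(a^n - b^n) + (a-b)*b^n" by (simp add: algebra_simps)
  also have "\<dots> \<le> a*(real n * (a - b) * a^(n-1)) + (a-b)*a^n"
    using Suc assms by (intro add_mono mult_left_mono mult_right_mono power_mono) auto
  also have "\<dots> = real (Suc n) * (a-b) * a^(Suc n - 1)"
    by (cases n) (auto simp: algebra_simps)
  finally show ?case .
qed

lemma packing_card:
  fixes S :: "'a::euclidean_space set" and \<gamma> :: real
  assumes fin: "finite S" and sph: "S \<subseteq> sphere 0 1"
    and sep: "\<And>x y. x\<in>S \<Longrightarrow> y\<in>S \<Longrightarrow> x\<noteq>y \<Longrightarrow> dist x y > \<gamma>"
    and g: "0 < \<gamma>" "\<gamma> \<le> 1"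
  shows "real (card S) \<le> 2 * real DIM('a) * (1 + 2/\<gamma>)^(DIM('a)-1)"
proof -
  define h where "h = \<gamma>/2"
  define d where "d = DIM('a)"
  define V where "V = unit_ball_vol (real d)"
  have h: "0 < h" "h \<le> 1/2" using g by (auto simp: h_def)
  have V: "V > 0" by (simp add: V_def)
  have d: "d \<ge> 1" by (simp add: d_def DIM_positive Suc_leI)
  let ?R = "ball (0::'a) (1+h) - cball 0 (1-h)"
  have disj: "disjoint_family_on (\<lambda>x. ball x h) S"
    unfolding disjoint_family_on_def
  proof (intro ballI impI)
    fix x y assume xy: "x\<in>S" "y\<in>S" "x\<noteq>y"
    show "ball x h \<inter> ball y h = {}"
    proof (rule ccontr)
      assume "ball x h \<inter> ball y h \<noteq> {}"
      then obtain z where "z \<in> ball x h" "z \<in> ball y h" by auto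
      then have "dist x y < 2*h"
        by (smt (verit) dist_commute dist_triangle mem_ball)
      with sep[OF xy] show False by (simp add: h_def)
    qed
  qed
  have sub: "(\<Union>x\<in>S. ball x h) \<subseteq> ?R"
  proof
    fix z assume "z \<in> (\<Union>x\<in>S. ball x h)"
    then obtain x where x: "x \<in> S" "dist x z < h" by auto
    have nx: "norm x = 1" using sph x by auto
    have "norm z < 1 + h" using x nx norm_triangle_ineq2[of z x]
      by (smt (verit) dist_norm norm_minus_commute norm_triangle_ineq)
    moreover have "norm z > 1 - h" using x nx norm_triangle_ineq2[of x z]
      by (simp add: dist_norm)
    ultimately show "z \<in> ?R" by auto
  qed
  have "ennreal (real (card S) * (V * h^d)) = (\<Sum>x\<in>S. emeasure lborel (ball x h))"
    using h by (simp add: emeasure_ball V_def d_def ennreal_of_nat_eq_real_of_nat ennreal_mult)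
  also have "\<dots> = emeasure lborel (\<Union>x\<in>S. ball x h)"
    by (rule sum_emeasure) (use fin disj in auto)
  also have "\<dots> \<le> emeasure lborel ?R"
    by (rule emeasure_mono[OF sub]) auto
  also have "\<dots> = emeasure lborel (ball (0::'a) (1+h)) - emeasure lborel (cball (0::'a) (1-h))"
    using h by (intro emeasure_Diff) (auto simp: emeasure_ball emeasure_cball)
  also have "\<dots> = ennreal (V*(1+h)^d - V*(1-h)^d)"
    using h by (simp add: emeasure_ball emeasure_cball V_def d_def ennreal_minus)
  finally have "ennreal (real (card S) * (V * h^d)) \<le> ennreal (V*(1+h)^d - V*(1-h)^d)" .
  moreover have "0 \<le> V*(1+h)^d - V*(1-h)^d"
    using h V power_mono[of "1-h" "1+h" d] by (simp add: right_diff_distrib[symmetric])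
  ultimately have "real (card S) * (V * h^d) \<le> V*(1+h)^d - V*(1-h)^d"
    by (simp add: ennreal_le_iff)
  then have "real (card S) * (V * h^d) \<le> V*((1+h)^d - (1-h)^d)"
    by (simp add: right_diff_distrib)
  also have "\<dots> \<le> V*(real d * (2*h) * (1+h)^(d-1))"
    using pow_diff_le[of "1-h" "1+h" d] h V by (intro mult_left_mono) auto
  finally have A: "real (card S) * (V * h^d) \<le> V*(real d * (2*h) * (1+h)^(d-1))" .
  obtain e where de: "d = Suc e" using d by (cases d) auto
  have "V*h*(real (card S) * h^e) = real (card S) * (V * h^d)"
    unfolding de power_Suc by (simp only: mult_ac)
  also note A
  also have "V*(real d * (2*h) * (1+h)^(d-1)) = V*h*(2*real d*(1+h)^e)"
    unfolding de by (simp only: mult_ac diff_Suc_1)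
  finally have B: "real (card S) * h^e \<le> 2*real d*(1+h)^e"
    using h V by (simp only: mult_le_cancel_left_pos mult_pos_pos)
  have hp: "h^e > 0" using h by simp
  from B have "real (card S) \<le> 2*real d*((1+h)^e / h^e)"
    using hp by (simp add: pos_le_divide_eq)
  also have "(1+h)^e / h^e = (1 + 2/\<gamma>)^e"
  proof -
    have "(1+h)/h = 1 + 2/\<gamma>" using h by (simp add: h_def field_simps)
    then show ?thesis by (simp add: power_divide[symmetric])
  qed
  finally show ?thesis using de by (simp add: d_def algebra_simps)
qed

lemma sphere_net:
  fixes \<gamma> :: real
  assumes g: "0 < \<gamma>" "\<gamma> \<le> 1"
  obtains S :: "'a::euclidean_space set" where "finite S" "S \<subseteq> sphere 0 1"
    "real (card S) \<le> 2 * real DIM('a) * (1 + 2/\<gamma>)^(DIM('a)-1)"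
    "\<And>y. norm y = 1 \<Longrightarrow> \<exists>x\<in>S. norm (y - x) \<le> \<gamma>"
proof -
  define K where "K = 2 * real DIM('a) * (1 + 2/\<gamma>)^(DIM('a)-1)"
  define P where "P = (\<lambda>k. \<exists>S::'a set. finite S \<and> S \<subseteq> sphere 0 1 \<and>
      (\<forall>x\<in>S. \<forall>y\<in>S. x\<noteq>y \<longrightarrow> dist x y > \<gamma>) \<and> card S = k)"
  have P0: "P 0" unfolding P_def by (intro exI[of _ "{}"]) auto
  have bnd: "\<forall>k. P k \<longrightarrow> k \<le> nat \<lceil>K\<rceil>"
  proof (intro allI impI)
    fix k assume "P k"
    then obtain S :: "'a set" where S: "finite S" "S \<subseteq> sphere 0 1"
      "\<forall>x\<in>S. \<forall>y\<in>S. x\<noteq>y \<longrightarrow> dist x y > \<gamma>" "card S = k" unfolding P_def by blast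
    have "real k \<le> K" unfolding K_def using packing_card[OF S(1,2) _ g] S(3,4) by blast
    then show "k \<le> nat \<lceil>K\<rceil>" by linarith
  qed
  obtain k where k: "P k" "\<forall>y. P y \<longrightarrow> y \<le> k"
    using Nat.ex_has_greatest_nat[OF P0 bnd] by blast
  then obtain S :: "'a set" where S: "finite S" "S \<subseteq> sphere 0 1"
      "\<forall>x\<in>S. \<forall>y\<in>S. x\<noteq>y \<longrightarrow> dist x y > \<gamma>" "card S = k" unfolding P_def by blast
  show ?thesis
  proof (rule that[OF S(1,2)])
    show "real (card S) \<le> 2 * real DIM('a) * (1 + 2/\<gamma>)^(DIM('a)-1)"
      using packing_card[OF S(1,2) _ g] S(3) by blast
  next
    fix y :: 'a assume y: "norm y = 1"
    show "\<exists>x\<in>S. norm (y - x) \<le> \<gamma>"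
    proof (rule ccontr)
      assume no: "\<not> (\<exists>x\<in>S. norm (y - x) \<le> \<gamma>)"
      then have yS: "y \<notin> S" using g by force
      have "P (Suc k)" unfolding P_def
      proof (intro exI[of _ "insert y S"] conjI)
        show "finite (insert y S)" using S by simp
        show "insert y S \<subseteq> sphere 0 1" using S y by auto
        show "card (insert y S) = Suc k" using S yS by simp
        show "\<forall>x\<in>insert y S. \<forall>z\<in>insert y S. x \<noteq> z \<longrightarrow> \<gamma> < dist x z"
          using S(3) no by (auto simp: dist_norm norm_minus_commute not_le)
      qed
      with k show False by auto
    qed
  qed
qed

lemma integral_2x_hi:
  fixes b :: real assumes "0 \<le> b"
  shows "((\<lambda>x. 2 * x) has_integral b^2) {0..b}"
proof -
  have "((\<lambda>x. x powr 1) has_integral (b powr (1+1) / (1+1))) {0..b}"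
    using has_integral_powr_from_0[of 1 b] assms by simp
  moreover have "b powr (1+1) / (1+1) = b^2/2" using assms
    by (cases "b=0") (simp_all add: powr_realpow)
  moreover have "\<And>x. x \<in> {0..b} \<Longrightarrow> x powr 1 = x" by simp
  ultimately have "((\<lambda>x. x) has_integral (b^2/2)) {0..b}"
    using has_integral_eq[of "{0..b}" "\<lambda>x. x powr 1" "\<lambda>x. x"] by simp
  from has_integral_mult_right[OF this, of 2] show ?thesis by simp
qed

lemma integral_2x:
  fixes b :: real assumes "0 \<le> b"
  shows "(\<integral>\<^sup>+ t. indicator {0..b} t * ennreal (2*t) \<partial>lborel) = ennreal (b^2)"
proof -
  have "integral\<^sup>N lborel (\<lambda>x. ennreal (indicator {0..b} x * (2*x))) = b^2"
    by (rule nn_integral_has_integral_lebesgue[OF _ integral_2x_hi[OF assms]]) simp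
  also have "(\<lambda>x. ennreal (indicator {0..b} x * (2*x))) = (\<lambda>t. indicator {0..b} t * ennreal (2*t))"
    by (rule ext) (simp split: split_indicator)
  finally show ?thesis .
qed

lemma integral_inv_sq:
  fixes c :: real assumes "0 < c"
  shows "(\<integral>\<^sup>+ t. indicator {c..} t * ennreal (1 / t^2) \<partial>lborel) = ennreal (1/c)"
proof -
  have "((\<lambda>x. x powr (-2)) has_integral -(c powr (-2+1)) / (-2+1)) {c..}"
    using has_integral_powr_to_inf[of "-2" c] assms by simp
  moreover have "- (c powr (-2+1)) / (-2+1) = 1/c"
    using assms by (simp add: powr_minus_divide)
  ultimately have "((\<lambda>x. x powr (-2)) has_integral 1/c) {c..}" by simp
  moreover have "\<And>x. x \<in> {c..} \<Longrightarrow> x powr (-2) = 1/x^2"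
    using assms by (simp add: powr_minus_divide powr_realpow)
  ultimately have I: "((\<lambda>x. 1 / x^2) has_integral (1/c)) {c..}"
    using has_integral_eq[of "{c..}" "\<lambda>x. x powr (-2)" "\<lambda>x. 1/x^2"] by simp
  have "integral\<^sup>N lborel (\<lambda>x. ennreal (indicator {c..} x * (1/x^2))) = 1/c"
    by (rule nn_integral_has_integral_lebesgue[OF _ I]) simp
  also have "(\<lambda>x. ennreal (indicator {c..} x * (1/x^2))) = (\<lambda>t. indicator {c..} t * ennreal (1/t^2))"
    by (rule ext) (simp split: split_indicator)
  finally show ?thesis .
qed

lemma layer_pointwise:
  fixes c :: ennreal
  shows "c \<le> (\<integral>\<^sup>+ t. (if 0 < t \<and> ennreal (t^2) < c then ennreal (2*t) else 0) \<partial>lborel)"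
proof (rule dense_le)
  fix y assume y: "y < c"
  then obtain y0 where y0: "y = ennreal y0" "0 \<le> y0"
    by (cases y) (auto simp: top_unique)
  have "y = (\<integral>\<^sup>+ t. indicator {0..sqrt y0} t * ennreal (2*t) \<partial>lborel)"
    using y0 by (simp add: integral_2x)
  also have "\<dots> \<le> (\<integral>\<^sup>+ t. (if 0 < t \<and> ennreal (t^2) < c then ennreal (2*t) else 0) \<partial>lborel)"
  proof (intro nn_integral_mono)
    fix t :: real
    show "indicator {0..sqrt y0} t * ennreal (2*t) \<le> (if 0 < t \<and> ennreal (t^2) < c then ennreal (2*t) else 0)"
    proof (cases "t \<in> {0<..sqrt y0}")
      case True
      then have "t^2 \<le> (sqrt y0)^2" by (intro power_mono) auto
      then have t2: "t^2 \<le> y0" using y0 by simp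
      have "ennreal (t^2) \<le> y" using y0 t2 by (simp add: ennreal_leI)
      then have "ennreal (t^2) < c" using y by (rule order.strict_trans1)
      then show ?thesis using True by (auto simp: indicator_def)
    next
      case False
      then show ?thesis by (cases "t = 0") (auto simp: indicator_def)
    qed
  qed
  finally show "y \<le> \<dots>" .
qed

lemma outer_layer_cake:
  fixes M :: "'b measure" and F :: "'b \<Rightarrow> ennreal" and f :: "real \<Rightarrow> ennreal"
  assumes fm: "finite_measure M"
    and bnd: "\<And>t. t > 0 \<Longrightarrow> \<exists>E\<in>sets M. {\<omega>\<in>space M. ennreal t < F \<omega>} \<subseteq> E \<and> emeasure M E \<le> f t"
  shows "(\<integral>\<^sup>+ \<omega>. (F \<omega>)^2 \<partial>M) \<le> (\<integral>\<^sup>+ t. indicator {0<..} t * (ennreal (2*t) * f t) \<partial>lborel)"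
proof -
  interpret finite_measure M by fact
  interpret P: pair_sigma_finite M lborel
    by (simp add: pair_sigma_finite_def lborel.sigma_finite_measure_axioms sigma_finite_measure_axioms)
  show ?thesis
    unfolding nn_integral_def[of M]
  proof (rule SUP_least, safe)
    fix g assume sg: "simple_function M g" and gle: "g \<le> (\<lambda>\<omega>. (F \<omega>)^2)"
    have gm: "g \<in> borel_measurable M" using sg by (rule borel_measurable_simple_function)
    define h where "h = (\<lambda>\<omega> t. if 0 < t \<and> ennreal (t^2) < g \<omega> then ennreal (2*t) else 0)"
    have hm: "case_prod h \<in> borel_measurable (M \<Otimes>\<^sub>M lborel)"
      unfolding h_def using gm by measurable
    have "integral\<^sup>S M g = integral\<^sup>N M g" by (simp add: nn_integral_eq_simple_integral sg)
    also have "\<dots> \<le> (\<integral>\<^sup>+ \<omega>. (\<integral>\<^sup>+ t. h \<omega> t \<partial>lborel) \<partial>M)"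
      unfolding h_def by (intro nn_integral_mono layer_pointwise)
    also have "\<dots> = (\<integral>\<^sup>+ t. (\<integral>\<^sup>+ \<omega>. h \<omega> t \<partial>M) \<partial>lborel)"
      by (rule P.Fubini'[OF hm, symmetric])
    also have "\<dots> \<le> (\<integral>\<^sup>+ t. indicator {0<..} t * (ennreal (2*t) * f t) \<partial>lborel)"
    proof (intro nn_integral_mono)
      fix t :: real
      show "(\<integral>\<^sup>+ \<omega>. h \<omega> t \<partial>M) \<le> indicator {0<..} t * (ennreal (2*t) * f t)"
      proof (cases "0 < t")
        case False then show ?thesis by (simp add: h_def)
      next
        case True
        obtain E where E: "E \<in> sets M" "{\<omega>\<in>space M. ennreal t < F \<omega>} \<subseteq> E" "emeasure M E \<le> f t"
          using bnd[OF True] by blast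
        have Sm: "{\<omega>\<in>space M. ennreal (t^2) < g \<omega>} \<in> sets M" using gm by measurable
        have "(\<integral>\<^sup>+ \<omega>. h \<omega> t \<partial>M) = (\<integral>\<^sup>+ \<omega>. ennreal (2*t) * indicator {\<omega>\<in>space M. ennreal (t^2) < g \<omega>} \<omega> \<partial>M)"
          using True by (intro nn_integral_cong) (auto simp: h_def indicator_def)
        also have "\<dots> = ennreal (2*t) * emeasure M {\<omega>\<in>space M. ennreal (t^2) < g \<omega>}"
          using Sm by (rule nn_integral_cmult_indicator)
        also have "\<dots> \<le> ennreal (2*t) * emeasure M E"
        proof (intro mult_left_mono emeasure_mono E(1))
          show "{\<omega>\<in>space M. ennreal (t^2) < g \<omega>} \<subseteq> E"
          proof
            fix \<omega> assume w: "\<omega> \<in> {\<omega>\<in>space M. ennreal (t^2) < g \<omega>}"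
            have "ennreal t < F \<omega>"
            proof (rule ccontr)
              assume "\<not> ennreal t < F \<omega>"
              then have "F \<omega> \<le> ennreal t" by simp
              then have "(F \<omega>)^2 \<le> (ennreal t)^2" by (intro power_mono) auto
              then have "g \<omega> \<le> ennreal (t^2)"
                using gle True by (auto simp: le_fun_def ennreal_power intro: order_trans)
              with w show False by auto
            qed
            with w E(2) show "\<omega> \<in> E" by auto
          qed
        qed simp
        also have "\<dots> \<le> ennreal (2*t) * f t" using E(3) by (intro mult_left_mono) auto
        finally show ?thesis using True by simp
      qed
    qed
    finally show "integral\<^sup>S M g \<le> (\<integral>\<^sup>+ t. indicator {0<..} t * (ennreal (2*t) * f t) \<partial>lborel)" .
  qed
qed

lemma unif_emeasure:
  fixes \<delta> a r :: real
  assumes d: "\<delta> > 0"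
  shows "emeasure (uniform_measure lborel {-\<delta>..\<delta>}) {e. \<bar>a - e\<bar> \<le> r}
       = emeasure lborel ({-\<delta>..\<delta>} \<inter> {e. \<bar>a - e\<bar> \<le> r}) / ennreal (2*\<delta>)"
proof -
  have "{e. \<bar>a - e\<bar> \<le> r} = {a-r..a+r}" by auto
  then have m: "{e. \<bar>a - e\<bar> \<le> r} \<in> sets lborel" by simp
  show ?thesis using d by (subst emeasure_uniform_measure) (auto simp: m)
qed

lemma unif_le1:
  fixes \<delta> a r :: real
  assumes d: "\<delta> > 0"
  shows "emeasure (uniform_measure lborel {-\<delta>..\<delta>}) {e. \<bar>a - e\<bar> \<le> r} \<le> 1"
proof -
  interpret prob_space "uniform_measure lborel {-\<delta>..\<delta>}"
    using d by (intro prob_space_uniform_measure) auto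
  show ?thesis by (rule emeasure_le_1)
qed

lemma unif_zero:
  fixes \<delta> a r :: real
  assumes d: "\<delta> > 0" and far: "\<bar>a\<bar> > \<delta> + r"
  shows "emeasure (uniform_measure lborel {-\<delta>..\<delta>}) {e. \<bar>a - e\<bar> \<le> r} = 0"
proof -
  have "{-\<delta>..\<delta>} \<inter> {e. \<bar>a - e\<bar> \<le> r} = {}" using far by auto
  then show ?thesis using d by (simp add: unif_emeasure)
qed

lemma unif_bound:
  fixes \<delta> a r :: real
  assumes d: "\<delta> > 0" and near: "\<bar>a\<bar> \<le> \<delta> + r"
  shows "emeasure (uniform_measure lborel {-\<delta>..\<delta>}) {e. \<bar>a - e\<bar> \<le> r}
     \<le> ennreal ((\<delta> + r - \<bar>a\<bar>) / (2*\<delta>))"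
proof -
  define I where "I = (if a \<ge> 0 then {a-r..\<delta>} else {-\<delta>..a+r})"
  have sub: "{-\<delta>..\<delta>} \<inter> {e. \<bar>a - e\<bar> \<le> r} \<subseteq> I" by (auto simp: I_def)
  have mI: "emeasure lborel I = ennreal (\<delta> + r - \<bar>a\<bar>)"
    using near by (auto simp: I_def)
  have "emeasure lborel ({-\<delta>..\<delta>} \<inter> {e. \<bar>a - e\<bar> \<le> r}) \<le> ennreal (\<delta> + r - \<bar>a\<bar>)"
  proof -
    have "I \<in> sets lborel" by (simp add: I_def)
    from emeasure_mono[OF sub this] mI show ?thesis by simp
  qed
  then have "emeasure lborel ({-\<delta>..\<delta>} \<inter> {e. \<bar>a - e\<bar> \<le> r}) / ennreal (2*\<delta>)
       \<le> ennreal (\<delta> + r - \<bar>a\<bar>) / ennreal (2*\<delta>)"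
    by (rule divide_right_mono_ennreal)
  also have "\<dots> = ennreal ((\<delta> + r - \<bar>a\<bar>) / (2*\<delta>))"
    using d near by (subst divide_ennreal) auto
  finally show ?thesis using d by (simp add: unif_emeasure)
qed

lemma pair_event:
  fixes \<mu> :: "'a::euclidean_space measure" and x :: 'a and lam \<delta> c :: real
  assumes pm: "prob_space \<mu>" and sm: "sets \<mu> = sets borel" and d: "\<delta> > 0"
  shows "{p. \<bar>lam * inner x (fst p) - snd p\<bar> \<le> \<delta> + c * norm (fst p)}
           \<in> sets (\<mu> \<Otimes>\<^sub>M uniform_measure lborel {-\<delta>..\<delta>})"
    and "emeasure (\<mu> \<Otimes>\<^sub>M uniform_measure lborel {-\<delta>..\<delta>})
           {p. \<bar>lam * inner x (fst p) - snd p\<bar> \<le> \<delta> + c * norm (fst p)}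
         = (\<integral>\<^sup>+ \<phi>. emeasure (uniform_measure lborel {-\<delta>..\<delta>})
               {e. \<bar>lam * inner x \<phi> - e\<bar> \<le> \<delta> + c * norm \<phi>} \<partial>\<mu>)"
proof -
  let ?U = "uniform_measure lborel {-\<delta>..\<delta>}"
  interpret U: prob_space ?U using d by (intro prob_space_uniform_measure) auto
  have ss: "sets (\<mu> \<Otimes>\<^sub>M ?U) = sets (borel \<Otimes>\<^sub>M borel)"
    by (rule sets_pair_measure_cong) (auto simp: sm)
  have "{p\<in>space (borel \<Otimes>\<^sub>M borel). \<bar>lam * inner x (fst p) - snd (p::'a\<times>real)\<bar> \<le> \<delta> + c * norm (fst p)} \<in> sets (borel \<Otimes>\<^sub>M borel)"
    by measurable
  then have "{p::'a\<times>real. \<bar>lam * inner x (fst p) - snd p\<bar> \<le> \<delta> + c * norm (fst p)} \<in> sets (borel \<Otimes>\<^sub>M borel)"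
    by (simp add: space_pair_measure)
  then show A: "{p. \<bar>lam * inner x (fst p) - snd p\<bar> \<le> \<delta> + c * norm (fst p)} \<in> sets (\<mu> \<Otimes>\<^sub>M ?U)"
    using ss by simp
  show "emeasure (\<mu> \<Otimes>\<^sub>M ?U) {p. \<bar>lam * inner x (fst p) - snd p\<bar> \<le> \<delta> + c * norm (fst p)}
         = (\<integral>\<^sup>+ \<phi>. emeasure ?U {e. \<bar>lam * inner x \<phi> - e\<bar> \<le> \<delta> + c * norm \<phi>} \<partial>\<mu>)"
    by (subst U.emeasure_pair_measure_alt[OF A]) (simp add: vimage_def)
qed

lemma sample_large:
  fixes \<mu> :: "'a::euclidean_space measure" and x :: 'a and lam \<delta> :: real
  assumes pm: "prob_space \<mu>" and sm: "sets \<mu> = sets borel" and d: "\<delta> > 0"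
    and ae: "AE \<phi> in \<mu>. norm \<phi> = 1" and lam: "lam > 0"
  shows "emeasure (\<mu> \<Otimes>\<^sub>M uniform_measure lborel {-\<delta>..\<delta>})
           {p. \<bar>lam * inner x (fst p) - snd p\<bar> \<le> \<delta> + \<delta> * norm (fst p)}
         \<le> emeasure \<mu> {\<phi>. \<bar>inner x \<phi>\<bar> \<le> 3*\<delta>/lam}"
proof -
  let ?U = "uniform_measure lborel {-\<delta>..\<delta>}"
  let ?S = "{\<phi>. \<bar>inner x \<phi>\<bar> \<le> 3*\<delta>/lam}"
  have Sm: "?S \<in> sets \<mu>" unfolding sm
  proof -
    have "{\<phi>\<in>space borel. \<bar>inner x \<phi>\<bar> \<le> 3*\<delta>/lam} \<in> sets borel" by measurable
    then show "?S \<in> sets borel" by simp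
  qed
  have "emeasure (\<mu> \<Otimes>\<^sub>M ?U) {p. \<bar>lam * inner x (fst p) - snd p\<bar> \<le> \<delta> + \<delta> * norm (fst p)}
     = (\<integral>\<^sup>+ \<phi>. emeasure ?U {e. \<bar>lam * inner x \<phi> - e\<bar> \<le> \<delta> + \<delta> * norm \<phi>} \<partial>\<mu>)"
    by (rule pair_event(2)[OF pm sm d])
  also have "\<dots> \<le> (\<integral>\<^sup>+ \<phi>. indicator ?S \<phi> \<partial>\<mu>)"
  proof (rule nn_integral_mono_AE)
    show "AE \<phi> in \<mu>. emeasure ?U {e. \<bar>lam * inner x \<phi> - e\<bar> \<le> \<delta> + \<delta> * norm \<phi>} \<le> indicator ?S \<phi>"
      using ae
    proof eventually_elim
      case (elim \<phi>)
      show ?case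
      proof (cases "\<phi> \<in> ?S")
        case True
        then show ?thesis using unif_le1[OF d] by simp
      next
        case False
        then have "3*\<delta>/lam < \<bar>inner x \<phi>\<bar>" by simp
        then have "3*\<delta> < \<bar>inner x \<phi>\<bar> * lam" using lam by (simp add: pos_divide_less_eq)
        then have "\<bar>lam * inner x \<phi>\<bar> > 3*\<delta>"
          using lam by (simp add: abs_mult mult.commute)
        then have "emeasure ?U {e. \<bar>lam * inner x \<phi> - e\<bar> \<le> \<delta> + \<delta> * norm \<phi>} = 0"
          using elim by (intro unif_zero[OF d]) auto
        then show ?thesis by (metis zero_le)
      qed
    qed
  qed
  also have "\<dots> = emeasure \<mu> ?S" using Sm by simp
  finally show ?thesis .
qed

lemma sample_small:
  fixes \<mu> :: "'a::euclidean_space measure" and x :: 'a and lam \<delta> t0 :: real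
  assumes pm: "prob_space \<mu>" and sm: "sets \<mu> = sets borel" and d: "\<delta> > 0"
    and ae: "AE \<phi> in \<mu>. norm \<phi> = 1" and lam: "lam > 0" and t0: "t0 > 0"
    and half: "measure \<mu> {\<phi>. \<bar>inner x \<phi>\<bar> \<le> t0} \<le> 1/2"
    and small: "lam * t0 \<le> 4*\<delta>"
  shows "emeasure (\<mu> \<Otimes>\<^sub>M uniform_measure lborel {-\<delta>..\<delta>})
           {p. \<bar>lam * inner x (fst p) - snd p\<bar> \<le> \<delta> + (lam*t0/2) * norm (fst p)}
         \<le> ennreal (1 - lam*t0/(8*\<delta>))"
proof -
  interpret prob_space \<mu> by fact
  let ?U = "uniform_measure lborel {-\<delta>..\<delta>}"
  let ?S = "{\<phi>. \<bar>inner x \<phi>\<bar> \<le> t0}"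
  define k where "k = 1 - lam*t0/(4*\<delta>)"
  have k: "0 \<le> k" "k \<le> 1" using small d lam t0 by (auto simp: k_def field_simps)
  have sp: "space \<mu> = UNIV" using sets_eq_imp_space_eq[OF sm] by simp
  have Sm: "?S \<in> sets \<mu>" unfolding sm
  proof -
    have "{\<phi>\<in>space borel. \<bar>inner x \<phi>\<bar> \<le> t0} \<in> sets borel" by measurable
    then show "?S \<in> sets borel" by simp
  qed
  have Sc: "-?S \<in> sets \<mu>" using Sm sp by (metis Compl_eq_Diff_UNIV sets.compl_sets)
  have "emeasure (\<mu> \<Otimes>\<^sub>M ?U) {p. \<bar>lam * inner x (fst p) - snd p\<bar> \<le> \<delta> + (lam*t0/2) * norm (fst p)}
     = (\<integral>\<^sup>+ \<phi>. emeasure ?U {e. \<bar>lam * inner x \<phi> - e\<bar> \<le> \<delta> + (lam*t0/2) * norm \<phi>} \<partial>\<mu>)"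
    by (rule pair_event(2)[OF pm sm d])
  also have "\<dots> \<le> (\<integral>\<^sup>+ \<phi>. indicator ?S \<phi> + ennreal k * indicator (-?S) \<phi> \<partial>\<mu>)"
  proof (rule nn_integral_mono_AE)
    show "AE \<phi> in \<mu>. emeasure ?U {e. \<bar>lam * inner x \<phi> - e\<bar> \<le> \<delta> + (lam*t0/2) * norm \<phi>}
            \<le> indicator ?S \<phi> + ennreal k * indicator (-?S) \<phi>"
      using ae
    proof eventually_elim
      case (elim \<phi>)
      show ?case
      proof (cases "\<phi> \<in> ?S")
        case True
        then show ?thesis using unif_le1[OF d] by simp
      next
        case False
        then have far: "\<bar>lam * inner x \<phi>\<bar> > lam * t0"
          using lam by (simp add: abs_mult)
        have "emeasure ?U {e. \<bar>lam * inner x \<phi> - e\<bar> \<le> \<delta> + (lam*t0/2) * norm \<phi>} \<le> ennreal k"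
        proof (cases "\<bar>lam * inner x \<phi>\<bar> > \<delta> + (\<delta> + (lam*t0/2) * norm \<phi>)")
          case True
          then show ?thesis using unif_zero[OF d True] by (metis zero_le)
        next
          case False
          then have "emeasure ?U {e. \<bar>lam * inner x \<phi> - e\<bar> \<le> \<delta> + (lam*t0/2) * norm \<phi>}
              \<le> ennreal ((\<delta> + (\<delta> + (lam*t0/2) * norm \<phi>) - \<bar>lam * inner x \<phi>\<bar>) / (2*\<delta>))"
            by (intro unif_bound[OF d]) simp
          also have "\<dots> \<le> ennreal k"
          proof (intro ennreal_leI)
            have "(\<delta> + (\<delta> + (lam*t0/2) * norm \<phi>) - \<bar>lam * inner x \<phi>\<bar>) \<le> 2*\<delta> - lam*t0/2"
              using far elim by simp
            note divide_right_mono[OF this, of "2*\<delta>"]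
            then have "(\<delta> + (\<delta> + (lam*t0/2) * norm \<phi>) - \<bar>lam * inner x \<phi>\<bar>) / (2*\<delta>) \<le> (2*\<delta> - lam*t0/2) / (2*\<delta>)"
              using d by simp
            also have "(2*\<delta> - lam*t0/2) / (2*\<delta>) = k" using d unfolding k_def by (simp add: diff_divide_distrib)
            finally show "(\<delta> + (\<delta> + (lam*t0/2) * norm \<phi>) - \<bar>lam * inner x \<phi>\<bar>) / (2*\<delta>) \<le> k" .
          qed
          finally show ?thesis .
        qed
        then show ?thesis using False by simp
      qed
    qed
  qed
  also have "\<dots> = emeasure \<mu> ?S + ennreal k * emeasure \<mu> (-?S)"
  proof -
    have "(\<integral>\<^sup>+ \<phi>. indicator ?S \<phi> + ennreal k * indicator (-?S) \<phi> \<partial>\<mu>)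
        = (\<integral>\<^sup>+ \<phi>. indicator ?S \<phi> \<partial>\<mu>) + (\<integral>\<^sup>+ \<phi>. ennreal k * indicator (-?S) \<phi> \<partial>\<mu>)"
      by (rule nn_integral_add) (use Sm Sc in auto)
    also have "\<dots> = emeasure \<mu> ?S + ennreal k * emeasure \<mu> (-?S)"
      using Sm Sc by (simp only: nn_integral_indicator nn_integral_cmult_indicator)
    finally show ?thesis .
  qed
  also have "\<dots> = ennreal (prob ?S + k * (1 - prob ?S))"
  proof -
    have c: "prob (-?S) = 1 - prob ?S" using prob_compl[OF Sm] sp by (simp add: Compl_eq_Diff_UNIV)
    have "emeasure \<mu> ?S + ennreal k * emeasure \<mu> (-?S) = ennreal (prob ?S) + ennreal k * ennreal (prob (-?S))"
      by (simp only: emeasure_eq_measure)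
    also have "\<dots> = ennreal (prob ?S + k * prob (-?S))"
      using k by (simp add: ennreal_mult ennreal_plus)
    finally show ?thesis using c by simp
  qed
  also have "\<dots> \<le> ennreal (1 - lam*t0/(8*\<delta>))"
  proof (intro ennreal_leI)
    have "prob ?S + k * (1 - prob ?S) = k + (1 - k) * prob ?S" by (simp add: algebra_simps)
    also have "\<dots> \<le> k + (1-k) * (1/2)" using k half by (intro add_left_mono mult_left_mono) auto
    also have "\<dots> = 1 - lam*t0/(8*\<delta>)" using d by (simp add: k_def field_simps)
    finally show "prob ?S + k * (1 - prob ?S) \<le> 1 - lam*t0/(8*\<delta>)" .
  qed
  finally show ?thesis .
qed

lemma prod_event:
  fixes M :: "'b measure" and A :: "'b set"
  assumes sf: "sigma_finite_measure M" and A: "A \<in> sets M"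
  shows "emeasure (PiM {..<N} (\<lambda>_. M)) {\<omega>\<in>space (PiM {..<N} (\<lambda>_. M)). \<forall>n<N. \<omega> n \<in> A}
       = emeasure M A ^ N"
proof -
  interpret product_sigma_finite "\<lambda>_. M"
    using sf by (simp add: product_sigma_finite_def)
  have Asub: "A \<subseteq> space M" using A sets.sets_into_space by auto
  have "{\<omega>\<in>space (PiM {..<N} (\<lambda>_. M)). \<forall>n<N. \<omega> n \<in> A} = PiE {..<N} (\<lambda>_. A)"
    using Asub by (auto simp: space_PiM PiE_def Pi_def)
  then show ?thesis using A by (simp add: emeasure_PiM)
qed

lemma noise_ae:
  fixes \<mu> :: "'a::euclidean_space measure" and \<delta> :: real
  assumes pm: "prob_space \<mu>" and d: "\<delta> > 0"
  shows "{\<omega>\<in>space (cr_joint \<mu> \<delta> N). \<forall>n<N. \<bar>snd (\<omega> n)\<bar> \<le> \<delta>} \<in> sets (cr_joint \<mu> \<delta> N)"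
    and "emeasure (cr_joint \<mu> \<delta> N) {\<omega>\<in>space (cr_joint \<mu> \<delta> N). \<forall>n<N. \<bar>snd (\<omega> n)\<bar> \<le> \<delta>} = 1"
proof -
  let ?U = "uniform_measure lborel {-\<delta>..\<delta>}"
  let ?\<nu> = "\<mu> \<Otimes>\<^sub>M ?U"
  interpret U: prob_space ?U using d by (intro prob_space_uniform_measure) auto
  interpret \<mu>: prob_space \<mu> by fact
  interpret pair_prob_space \<mu> ?U by unfold_locales
  have sU: "space ?U = UNIV" by simp
  define B where "B = space \<mu> \<times> {-\<delta>..\<delta>}"
  have Bm: "B \<in> sets ?\<nu>" unfolding B_def by (intro pair_measureI) auto
  have "emeasure ?\<nu> B = 1" unfolding B_def using d
    by (subst U.emeasure_pair_measure_Times) (auto simp: \<mu>.emeasure_space_1 emeasure_uniform_measure_1)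
  have eqs: "{\<omega>\<in>space (cr_joint \<mu> \<delta> N). \<forall>n<N. \<bar>snd (\<omega> n)\<bar> \<le> \<delta>}
       = {\<omega>\<in>space (PiM {..<N} (\<lambda>_. ?\<nu>)). \<forall>n<N. \<omega> n \<in> B}"
  proof -
    have "\<And>p. p \<in> space ?\<nu> \<Longrightarrow> (\<bar>snd p\<bar> \<le> \<delta>) = (p \<in> B)"
      by (auto simp: B_def space_pair_measure)
    note h = this
    show ?thesis unfolding cr_joint_def
    proof (rule Collect_cong)
      fix \<omega>
      show "(\<omega> \<in> space (PiM {..<N} (\<lambda>_. ?\<nu>)) \<and> (\<forall>n<N. \<bar>snd (\<omega> n)\<bar> \<le> \<delta>)) =
            (\<omega> \<in> space (PiM {..<N} (\<lambda>_. ?\<nu>)) \<and> (\<forall>n<N. \<omega> n \<in> B))"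
      proof (cases "\<omega> \<in> space (PiM {..<N} (\<lambda>_. ?\<nu>))")
        case True
        then have "\<And>n. n < N \<Longrightarrow> \<omega> n \<in> space ?\<nu>" by (auto simp: space_PiM)
        then show ?thesis using True h by blast
      qed simp
    qed
  qed
  show "{\<omega>\<in>space (cr_joint \<mu> \<delta> N). \<forall>n<N. \<bar>snd (\<omega> n)\<bar> \<le> \<delta>} \<in> sets (cr_joint \<mu> \<delta> N)"
    unfolding eqs unfolding cr_joint_def using Bm by measurable
  show "emeasure (cr_joint \<mu> \<delta> N) {\<omega>\<in>space (cr_joint \<mu> \<delta> N). \<forall>n<N. \<bar>snd (\<omega> n)\<bar> \<le> \<delta>} = 1"
    unfolding eqs unfolding cr_joint_def
    using prod_event[OF _ Bm] \<open>emeasure ?\<nu> B = 1\<close> sigma_finite_measure_axioms by simp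
qed

lemma incl:
  fixes \<phi> :: "nat \<Rightarrow> 'a::euclidean_space" and \<epsilon> :: "nat \<Rightarrow> real" and S :: "'a set"
  assumes d: "\<delta> > 0" and lam: "lam > 0" and c: "c \<ge> 0"
    and net: "\<And>y. norm y = 1 \<Longrightarrow> \<exists>x\<in>S. norm (y - x) \<le> c / lam"
    and noise: "\<And>n. n < N \<Longrightarrow> \<bar>\<epsilon> n\<bar> \<le> \<delta>"
    and W: "ennreal lam < worst_case_error N \<delta> \<phi> \<epsilon>"
  shows "\<exists>x\<in>S. \<forall>n<N. \<bar>lam * inner x (\<phi> n) - \<epsilon> n\<bar> \<le> \<delta> + c * norm (\<phi> n)"
proof -
  obtain u where u: "u \<in> cr_polytope N \<delta> \<phi> \<epsilon>" "ennreal lam < ennreal (norm u)"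
    using W unfolding worst_case_error_def by (auto simp: less_SUP_iff)
  have lu: "lam < norm u" using u(2) lam by (simp add: ennreal_less_iff)
  then have nu: "norm u > 0" using lam by linarith
  define t where "t = lam / norm u"
  have t: "0 < t" "t \<le> 1" using lu lam nu by (auto simp: t_def)
  define y where "y = u /\<^sub>R norm u"
  have ny: "norm y = 1" using nu by (simp add: y_def)
  obtain x where x: "x \<in> S" "norm (y - x) \<le> c / lam" using net[OF ny] by blast
  have "\<forall>n<N. \<bar>lam * inner x (\<phi> n) - \<epsilon> n\<bar> \<le> \<delta> + c * norm (\<phi> n)"
  proof (intro allI impI)
    fix n assume n: "n < N"
    have un: "\<bar>inner u (\<phi> n) - \<epsilon> n\<bar> \<le> \<delta>" using u(1) n by (auto simp: cr_polytope_def)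
    have ly: "lam * inner y (\<phi> n) = t * inner u (\<phi> n)"
      using nu by (simp add: y_def t_def divide_inverse mult_ac)
    have "\<bar>lam * inner y (\<phi> n) - \<epsilon> n\<bar> = \<bar>t * (inner u (\<phi> n) - \<epsilon> n) - (1 - t) * \<epsilon> n\<bar>"
      unfolding ly by (simp add: algebra_simps)
    also have "\<dots> \<le> t * \<bar>inner u (\<phi> n) - \<epsilon> n\<bar> + (1 - t) * \<bar>\<epsilon> n\<bar>"
    proof -
      have "\<bar>t * (inner u (\<phi> n) - \<epsilon> n) - (1 - t) * \<epsilon> n\<bar>
          \<le> \<bar>t * (inner u (\<phi> n) - \<epsilon> n)\<bar> + \<bar>(1 - t) * \<epsilon> n\<bar>" by (rule abs_triangle_ineq4)
      also have "\<dots> = t * \<bar>inner u (\<phi> n) - \<epsilon> n\<bar> + (1 - t) * \<bar>\<epsilon> n\<bar>"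
        using t by (simp add: abs_mult)
      finally show ?thesis .
    qed
    also have "\<dots> \<le> t * \<delta> + (1 - t) * \<delta>"
      using t un noise[OF n] by (intro add_mono mult_left_mono) auto
    finally have A: "\<bar>lam * inner y (\<phi> n) - \<epsilon> n\<bar> \<le> \<delta>" by (simp add: algebra_simps)
    have "\<bar>inner (x - y) (\<phi> n)\<bar> \<le> norm (x - y) * norm (\<phi> n)" by (rule Cauchy_Schwarz_ineq2)
    also have "\<dots> \<le> (c / lam) * norm (\<phi> n)"
      using x by (intro mult_right_mono) (auto simp: norm_minus_commute)
    finally have B: "lam * \<bar>inner (x - y) (\<phi> n)\<bar> \<le> c * norm (\<phi> n)"
      using lam by (simp add: field_simps)
    have "lam * inner x (\<phi> n) - \<epsilon> n = (lam * inner y (\<phi> n) - \<epsilon> n) + lam * inner (x - y) (\<phi> n)"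
      by (simp add: inner_diff_left algebra_simps)
    moreover have "\<bar>lam * inner (x - y) (\<phi> n)\<bar> = lam * \<bar>inner (x - y) (\<phi> n)\<bar>"
      using lam by (simp add: abs_mult)
    ultimately have "\<bar>lam * inner x (\<phi> n) - \<epsilon> n\<bar> \<le> \<bar>lam * inner y (\<phi> n) - \<epsilon> n\<bar> + lam * \<bar>inner (x - y) (\<phi> n)\<bar>"
      by linarith
    then show "\<bar>lam * inner x (\<phi> n) - \<epsilon> n\<bar> \<le> \<delta> + c * norm (\<phi> n)" using A B by linarith
  qed
  with x show ?thesis by blast
qed

lemma tail_bound:
  fixes \<mu> :: "'a::euclidean_space measure" and \<delta> lam c q :: real
  assumes pm: "prob_space \<mu>" and sm: "sets \<mu> = sets borel" and d: "\<delta> > 0"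
    and lam: "lam > 0" and c: "c > 0" "c / lam \<le> 1" and q: "q \<ge> 0"
    and qb: "\<And>x. norm x = 1 \<Longrightarrow> emeasure (\<mu> \<Otimes>\<^sub>M uniform_measure lborel {-\<delta>..\<delta>})
           {p. \<bar>lam * inner x (fst p) - snd p\<bar> \<le> \<delta> + c * norm (fst p)} \<le> ennreal q"
  shows "\<exists>E\<in>sets (cr_joint \<mu> \<delta> N).
     {\<omega>\<in>space (cr_joint \<mu> \<delta> N). ennreal lam < worst_case_error N \<delta> (\<lambda>n. fst (\<omega> n)) (\<lambda>n. snd (\<omega> n))} \<subseteq> E
     \<and> emeasure (cr_joint \<mu> \<delta> N) E \<le> ennreal (2 * real DIM('a) * (1 + 2/(c/lam))^(DIM('a)-1) * q^N)"
proof -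
  let ?U = "uniform_measure lborel {-\<delta>..\<delta>}"
  let ?\<nu> = "\<mu> \<Otimes>\<^sub>M ?U"
  let ?Q = "cr_joint \<mu> \<delta> N"
  let ?A = "\<lambda>x::'a. {p. \<bar>lam * inner x (fst p) - snd p\<bar> \<le> \<delta> + c * norm (fst p)}"
  interpret U: prob_space ?U using d by (intro prob_space_uniform_measure) auto
  interpret \<mu>: prob_space \<mu> by fact
  interpret pair_prob_space \<mu> ?U by unfold_locales
  have \<nu>p: "prob_space ?\<nu>" by (rule prob_space_pair) unfold_locales
  interpret Q: prob_space ?Q unfolding cr_joint_def by (rule prob_space_PiM) (rule \<nu>p)
  have gpos: "c / lam > 0" using c lam by simp
  obtain S :: "'a set" where S: "finite S" "S \<subseteq> sphere 0 1"
    "real (card S) \<le> 2 * real DIM('a) * (1 + 2/(c/lam))^(DIM('a)-1)"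
    "\<And>y. norm y = 1 \<Longrightarrow> \<exists>x\<in>S. norm (y - x) \<le> c/lam"
    using sphere_net[OF gpos c(2)] by blast
  define G where "G = {\<omega>\<in>space ?Q. \<forall>n<N. \<bar>snd (\<omega> n)\<bar> \<le> \<delta>}"
  define Ex where "Ex = (\<lambda>x. {\<omega>\<in>space ?Q. \<forall>n<N. \<omega> n \<in> ?A x})"
  define E where "E = (space ?Q - G) \<union> (\<Union>x\<in>S. Ex x)"
  have Gm: "G \<in> sets ?Q" unfolding G_def by (rule noise_ae(1)[OF pm d])
  have G1: "emeasure ?Q G = 1" unfolding G_def by (rule noise_ae(2)[OF pm d])
  have Am: "?A x \<in> sets ?\<nu>" for x by (rule pair_event(1)[OF pm sm d])
  have Exm: "Ex x \<in> sets ?Q" for x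
    unfolding Ex_def cr_joint_def using Am[of x] by measurable
  have Em: "E \<in> sets ?Q" unfolding E_def using Gm Exm S(1) by auto
  have sub: "{\<omega>\<in>space ?Q. ennreal lam < worst_case_error N \<delta> (\<lambda>n. fst (\<omega> n)) (\<lambda>n. snd (\<omega> n))} \<subseteq> E"
  proof
    fix \<omega> assume w: "\<omega> \<in> {\<omega>\<in>space ?Q. ennreal lam < worst_case_error N \<delta> (\<lambda>n. fst (\<omega> n)) (\<lambda>n. snd (\<omega> n))}"
    show "\<omega> \<in> E"
    proof (cases "\<omega> \<in> G")
      case False then show ?thesis using w by (auto simp: E_def)
    next
      case True
      then have noise: "\<And>n. n < N \<Longrightarrow> \<bar>snd (\<omega> n)\<bar> \<le> \<delta>" by (auto simp: G_def)
      obtain x where "x \<in> S" "\<forall>n<N. \<bar>lam * inner x (fst (\<omega> n)) - snd (\<omega> n)\<bar> \<le> \<delta> + c * norm (fst (\<omega> n))"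
        using incl[where S=S and N=N and \<phi>="\<lambda>n. fst (\<omega> n)" and \<epsilon>="\<lambda>n. snd (\<omega> n)" and lam=lam and c=c and \<delta>=\<delta>,
            OF d lam less_imp_le[OF c(1)] S(4) noise] w by blast
      then show ?thesis using w by (auto simp: E_def Ex_def)
    qed
  qed
  have "emeasure ?Q E \<le> emeasure ?Q (space ?Q - G) + emeasure ?Q (\<Union>x\<in>S. Ex x)"
    unfolding E_def by (rule emeasure_subadditive) (use Gm Exm S(1) in auto)
  also have "emeasure ?Q (space ?Q - G) = 0"
    using Gm G1 by (simp add: emeasure_compl Q.emeasure_space_1)
  also have "emeasure ?Q (\<Union>x\<in>S. Ex x) \<le> (\<Sum>x\<in>S. emeasure ?Q (Ex x))"
    by (rule emeasure_subadditive_finite) (use S(1) Exm in auto)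
  also have "\<dots> \<le> (\<Sum>x\<in>S. ennreal (q^N))"
  proof (rule sum_mono)
    fix x assume x: "x \<in> S"
    then have nx: "norm x = 1" using S(2) by auto
    have "emeasure ?Q (Ex x) = emeasure ?\<nu> (?A x) ^ N"
      unfolding Ex_def cr_joint_def
      by (rule prod_event[OF _ Am]) (rule sigma_finite_measure_axioms)
    also have "\<dots> \<le> (ennreal q) ^ N" by (intro power_mono qb[OF nx]) auto
    finally show "emeasure ?Q (Ex x) \<le> ennreal (q^N)" using q by (simp add: ennreal_power)
  qed
  also have "\<dots> = ennreal (real (card S) * q^N)" using q by (simp add: ennreal_of_nat_eq_real_of_nat ennreal_mult)
  also have "\<dots> \<le> ennreal (2 * real DIM('a) * (1 + 2/(c/lam))^(DIM('a)-1) * q^N)"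
    using S(3) q by (intro ennreal_leI mult_right_mono) auto
  finally show ?thesis using Em sub by auto
qed

lemma exp_cubic: fixes x :: real assumes "0 \<le> x" shows "x^3/27 \<le> exp x"
proof -
  have "(x/3)^3 \<le> (1 + x/3)^3" using assms by (intro power_mono) auto
  also have "\<dots> \<le> (exp (x/3))^3" using assms exp_ge_add_one_self[of "x/3"] by (intro power_mono) auto
  also have "\<dots> = exp x" by (simp add: exp_of_nat_mult[symmetric])
  finally show ?thesis by (simp add: power_divide)
qed

lemma small_tail_real:
  fixes M1 a lam q :: real and N :: nat
  assumes M1: "M1 \<ge> 1" and a: "a > 0" and lam: "lam \<ge> 2*(ln M1 + 1)/a"
    and q: "0 \<le> q" "q^N \<le> exp (-(a*lam))"
  shows "M1 * q^N \<le> 216 / (a^3 * lam^3)"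
proof -
  have lp: "lam > 0" using lam a M1 by (smt (verit) divide_pos_pos ln_ge_zero)
  have al: "a*lam/2 \<ge> ln M1 + 1" using lam a by (simp add: field_simps)
  have e1: "exp (-(a*lam/2)) \<le> exp (-(ln M1 + 1))" using al by simp
  also have "\<dots> \<le> exp (-(ln M1))" by simp
  also have "\<dots> = 1 / M1" using M1 by (simp add: exp_minus inverse_eq_divide)
  finally have e1: "exp (-(a*lam/2)) \<le> 1 / M1" .
  have "(a*lam/2)^3/27 \<le> exp (a*lam/2)" using a lp by (intro exp_cubic) auto
  then have e2: "exp (-(a*lam/2)) \<le> 216 / (a^3*lam^3)"
    using a lp by (simp add: exp_minus field_simps power_mult_distrib)
  have "M1 * q^N \<le> M1 * exp (-(a*lam))" using q M1 by (intro mult_left_mono) auto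
  also have "exp (-(a*lam)) = exp (-(a*lam/2)) * exp (-(a*lam/2))" by (simp add: exp_add[symmetric])
  also have "M1 * (exp (-(a*lam/2)) * exp (-(a*lam/2))) \<le> M1 * ((1/M1) * (216 / (a^3*lam^3)))"
    using e1 e2 M1 by (intro mult_left_mono mult_mono) auto
  also have "\<dots> = 216 / (a^3*lam^3)" using M1 by simp
  finally show ?thesis .
qed

lemma q_pow_exp:
  fixes u :: real and N :: nat
  assumes "0 \<le> u" "u \<le> 1"
  shows "(1 - u)^N \<le> exp (-(real N * u))"
proof -
  have "(1 - u)^N \<le> (exp (-u))^N"
    using assms exp_ge_add_one_self[of "-u"] by (intro power_mono) auto
  also have "\<dots> = exp (-(real N * u))" by (simp add: exp_of_nat_mult[symmetric])
  finally show ?thesis .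
qed

lemma ln16_ge2: "2 \<le> ln (16::real)"
proof -
  have "exp (2::real) = exp 1 * exp 1" by (simp add: exp_add[symmetric])
  also have "\<dots> \<le> 3 * 3" using exp_le by (intro mult_mono) auto
  finally have "exp (2::real) \<le> 16" by simp
  then show ?thesis by (subst ln_ge_iff) auto
qed

lemma K_bound:
  fixes \<beta> :: real and d :: nat
  assumes b: "\<beta> \<ge> 1" and d: "d \<ge> 1"
  shows "ln (2 * real d * (1 + 4*\<beta>)^(d-1)) + 1 \<le> 2 * real d * ln (16*\<beta>)"
proof -
  define l where "l = ln (16*\<beta>)"
  have "ln 16 \<le> ln (16*\<beta>)" using b by simp
  then have l2: "l \<ge> 2" unfolding l_def using ln16_ge2 by linarith
  have p1: "2 * real d > 0" using d by simp
  have p2: "(1 + 4*\<beta>)^(d-1) > 0" using b by simp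
  have "ln (2 * real d * (1 + 4*\<beta>)^(d-1)) = ln (2 * real d) + ln ((1 + 4*\<beta>)^(d-1))"
    using p1 p2 by (rule ln_mult_pos)
  also have "ln ((1 + 4*\<beta>)^(d-1)) = real (d-1) * ln (1 + 4*\<beta>)"
    using b by (intro ln_realpow)
  finally have e: "ln (2 * real d * (1 + 4*\<beta>)^(d-1)) = ln (2 * real d) + real (d-1) * ln (1 + 4*\<beta>)" .
  have A: "ln (2 * real d) \<le> 2 * real d - 1" using p1 by (rule ln_le_minus_one)
  have "ln (1 + 4*\<beta>) \<le> l" unfolding l_def using b by simp
  then have B: "real (d-1) * ln (1 + 4*\<beta>) \<le> real (d-1) * l" by (intro mult_left_mono) auto
  have C: "real (d-1) = real d - 1" using d by simp
  have "(real d + 1) * 2 \<le> (real d + 1) * l" using l2 by (intro mult_left_mono) auto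
  then have D: "2 * real d + (real d - 1) * l \<le> 2 * real d * l" by (simp add: algebra_simps)
  show ?thesis using e A B C D by (simp add: l_def)
qed

lemma st_eq:
  fixes P K n :: real assumes "P > 0" "K > 0" "n > 0"
  shows "(2*K/(n/P))^2 + 2*(216/(n/P)^3)/(2*K/(n/P)) = (P^2/n^2)*(4*K^2 + 216/K)"
  using assms by (simp add: field_simps power2_eq_square power3_eq_cube)

lemma small_total:
  fixes \<delta> \<beta> D K :: real and N :: nat
  assumes d: "\<delta> > 0" and b: "\<beta> \<ge> 1" and D: "D \<ge> 1" and N: "N \<ge> 1"
    and K: "1 \<le> K" "K \<le> 2 * D * ln (16*\<beta>)"
  shows "(2*K/(real N/(8*\<delta>*\<beta>)))^2 + 2*(216/(real N/(8*\<delta>*\<beta>))^3)/(2*K/(real N/(8*\<delta>*\<beta>)))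
     \<le> 10^5 * \<delta>^2 * D^2 * \<beta>^2 * (ln (16*\<beta>))^2 / ((real N + 1) * (real N + 2))"
proof -
  define P where "P = 8*\<delta>*\<beta>"
  define n where "n = real N"
  define l where "l = ln (16*\<beta>)"
  define X where "X = \<delta>^2 * D^2 * \<beta>^2 * l^2"
  have P: "P > 0" using d b by (simp add: P_def)
  have n: "n \<ge> 1" using N by (simp add: n_def)
  have "ln 16 \<le> ln (16*\<beta>)" using b by simp
  then have l: "l \<ge> 1" unfolding l_def using ln16_ge2 by linarith
  have "(2*K/(n/P))^2 + 2*(216/(n/P)^3)/(2*K/(n/P)) = (P^2/n^2)*(4*K^2 + 216/K)"
    using P K n by (intro st_eq) auto
  also have "\<dots> \<le> (P^2/n^2)*(4*K^2 + 216)"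
  proof -
    have "216/K \<le> 216" using K by (simp add: divide_le_eq)
    then show ?thesis by (intro mult_left_mono) auto
  qed
  also have "\<dots> \<le> (P^2/n^2)*(232 * D^2 * l^2)"
  proof -
    have "K^2 \<le> (2*D*l)^2" using K by (intro power_mono) (auto simp: l_def)
    then have k2: "K^2 \<le> 4*(D^2*l^2)" by (simp add: power_mult_distrib)
    have "1 \<le> D*l" using D l by (metis mult_mono' mult_1 zero_le_one order.trans)
    then have "1 \<le> (D*l)^2" by simp
    then have "1 \<le> D^2*l^2" by (simp add: power_mult_distrib)
    with k2 have "4*K^2 + 216 \<le> 232 * D^2 * l^2" by simp
    then show ?thesis by (intro mult_left_mono) auto
  qed
  also have "\<dots> = 14848 * X / n^2" by (simp add: P_def X_def power_mult_distrib)
  also have "\<dots> \<le> 10^5 * X / ((n + 1) * (n + 2))"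
  proof -
    have X: "X \<ge> 0" by (simp add: X_def)
    have "14848 * ((n + 1) * (n + 2)) \<le> 10^5 * n^2"
    proof -
      have "(n + 1) * (n + 2) = n^2 + 3*n + 2" by (simp add: algebra_simps power2_eq_square)
      moreover have "n \<le> n^2" using n by (simp add: power2_eq_square)
      moreover have "1 \<le> n^2" using n by simp
      ultimately show ?thesis by simp
    qed
    then have "14848 / n^2 \<le> 10^5 / ((n + 1) * (n + 2))"
      using n by (simp add: divide_le_eq le_divide_eq mult.commute)
    from mult_right_mono[OF this X] show ?thesis by simp
  qed
  finally show ?thesis by (simp add: P_def n_def l_def X_def mult_ac)
qed

lemma large_real:
  fixes \<delta> \<alpha> s lam :: real and d N :: nat
  assumes dl: "\<delta> > 0" and al: "\<alpha> \<ge> 1" and s: "s > 0" and dim: "d \<ge> 1"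
    and sN: "real N * s \<ge> real d + 2"
    and lam: "lam \<ge> 4*\<delta>*((2*\<alpha>) powr (1/s))"
  shows "2*real d*(1 + 2/(\<delta>/lam))^(d-1) * (\<alpha> * (3*\<delta>/lam) powr s)^N
     \<le> (2*real d*3^(2*d+1)*((2*\<alpha>) powr (1/s))^(d+2)*\<delta>^3*(1/2)^N) / lam^3"
proof -
  define \<beta> where "\<beta> = (2*\<alpha>) powr (1/s)"
  have b1: "\<beta> \<ge> 1" unfolding \<beta>_def using al s by (intro ge_one_powr_ge_zero) auto
  have bs: "\<beta> powr s = 2*\<alpha>" unfolding \<beta>_def using al s by (simp add: powr_powr)
  define t where "t = lam/(\<delta>*\<beta>)"
  have lamp: "lam > 0" using lam dl b1 unfolding \<beta>_def[symmetric] by (smt (verit) mult_pos_pos)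
  have t4: "t \<ge> 4" using lam dl b1 unfolding t_def \<beta>_def[symmetric] by (simp add: le_divide_eq)
  have lt: "lam = \<delta>*\<beta>*t" using dl b1 by (simp add: t_def)
  have h1: "1 + 2/(\<delta>/lam) \<le> 3*\<beta>*t"
  proof -
    have "2/(\<delta>/lam) = 2*\<beta>*t" using dl b1 lt by simp
    moreover have "1 \<le> \<beta>*t" using b1 t4 by (metis mult_mono' mult_1 zero_le_one order.trans one_le_numeral le_numeral_extra(4) dual_order.trans)
    ultimately show ?thesis by simp
  qed
  have h2: "\<alpha> * (3*\<delta>/lam) powr s = (1/2) * (3/t) powr s"
  proof -
    have "3*\<delta>/lam = (3/t) * (1/\<beta>)" using dl b1 lt by simp
    then have "(3*\<delta>/lam) powr s = ((3/t) * (1/\<beta>)) powr s" by simp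
    also have "\<dots> = (3/t) powr s * (1/\<beta>) powr s" using t4 b1 by (intro powr_mult)
    finally have "(3*\<delta>/lam) powr s = (3/t) powr s * (1/\<beta>) powr s" .
    also have "(1/\<beta>) powr s = 1/(2*\<alpha>)" using b1 bs by (simp add: powr_divide)
    finally show ?thesis using al by simp
  qed
  have tp: "0 < 3/t" "3/t \<le> 1" using t4 by auto
  have h3: "(\<alpha> * (3*\<delta>/lam) powr s)^N \<le> (1/2)^N * (3/t)^(d+2)"
  proof -
    have "((3/t) powr s)^N = (3/t) powr (s * real N)"
      using tp by (simp add: powr_realpow[symmetric] powr_powr)
    also have "\<dots> \<le> (3/t) powr (real (d+2))"
      using tp sN by (intro powr_mono') (auto simp: mult.commute)
    also have "\<dots> = (3/t)^(d+2)" using tp(1) by (rule powr_realpow)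
    finally have "((3/t) powr s)^N \<le> (3/t)^(d+2)" .
    then show ?thesis unfolding h2 power_mult_distrib by (intro mult_left_mono) auto
  qed
  have "2*real d*(1 + 2/(\<delta>/lam))^(d-1) * (\<alpha> * (3*\<delta>/lam) powr s)^N
      \<le> 2*real d*(3*\<beta>*t)^(d-1) * ((1/2)^N * (3/t)^(d+2))"
  proof (intro mult_mono h3 mult_left_mono power_mono h1)
    show "0 \<le> 1 + 2/(\<delta>/lam)" using dl lamp by simp
  qed (use dl lamp b1 t4 al in auto)
  also have "\<dots> = (2*real d*3^(2*d+1)*\<beta>^(d+2)*\<delta>^3*(1/2)^N) / lam^3"
  proof -
    obtain e where e: "d = Suc e" using dim by (cases d) auto
    have F1: "(3*\<beta>*t)^e * (3/t)^(Suc e + 2) = 3^(2*Suc e+1) * \<beta>^e / t^3"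
      using t4 by (simp add: power_mult_distrib power_divide power_add field_simps power_mult power2_eq_square power3_eq_cube)
    have F2: "\<beta>^(Suc e+2)*\<delta>^3 / lam^3 = \<beta>^e / t^3"
      using dl b1 t4 unfolding lt by (simp add: power_mult_distrib power_add field_simps power3_eq_cube)
    have A: "2*real d*(3*\<beta>*t)^(d-1) * ((1/2)^N * (3/t)^(d+2))
       = (2*real d*(1/2)^N) * ((3*\<beta>*t)^e * (3/t)^(Suc e + 2))"
      unfolding e by (simp only: mult_ac diff_Suc_1)
    have B: "(2*real d*3^(2*d+1)*\<beta>^(d+2)*\<delta>^3*(1/2)^N) / lam^3
       = (2*real d*(1/2)^N) * (3^(2*Suc e+1) * (\<beta>^(Suc e+2)*\<delta>^3 / lam^3))"
      unfolding e by (simp only: mult_ac times_divide_eq_right)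
    show ?thesis unfolding A B F1 F2 by (simp only: times_divide_eq_right)

  qed
  finally show ?thesis by (simp add: \<beta>_def)
qed

lemma large_final:
  fixes \<delta> \<alpha> s :: real and d N :: nat
  assumes dl: "\<delta> > 0" and al: "\<alpha> \<ge> 1" and s: "s > 0"
  shows "2*((2*real d*3^(2*d+1)*((2*\<alpha>) powr (1/s))^(d+2)*\<delta>^3*(1/2)^N)) / (4*\<delta>*((2*\<alpha>) powr (1/s)))
     \<le> \<delta>^2 * 32^(d+1) * (2*\<alpha>) powr ((real d + 1)/s) * (1/2)^N"
proof -
  define \<beta> where "\<beta> = (2*\<alpha>) powr (1/s)"
  have b1: "\<beta> \<ge> 1" unfolding \<beta>_def using al s by (intro ge_one_powr_ge_zero) auto
  have bp: "\<beta>^(d+1) = (2*\<alpha>) powr ((real d + 1)/s)"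
  proof -
    have "\<beta>^(d+1) = \<beta> powr (real (d+1))" using b1 by (subst powr_realpow) auto
    also have "\<dots> = (2*\<alpha>) powr (1/s * real (d+1))" unfolding \<beta>_def by (simp add: powr_powr)
    also have "1/s * real (d+1) = (real d + 1)/s" by simp
    finally show ?thesis .
  qed
  have "2*((2*real d*3^(2*d+1)*\<beta>^(d+2)*\<delta>^3*(1/2)^N)) / (4*\<delta>*\<beta>)
       = (real d*3^(2*d+1)) * (\<delta>^2 * \<beta>^(d+1) * (1/2)^N)"
    using dl b1 by (simp add: field_simps power2_eq_square power3_eq_cube)
  also have "\<dots> \<le> 32^(d+1) * (\<delta>^2 * \<beta>^(d+1) * (1/2)^N)"
  proof (intro mult_right_mono)
    have "real d \<le> 2^d" using less_exp[of d] by (metis of_nat_le_iff of_nat_numeral of_nat_power less_imp_le)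
    then have "real d*3^(2*d+1) \<le> 2^d * 3^(2*d+1)" by (intro mult_right_mono) auto
    also have "(2::real)^d * 3^(2*d+1) = 3 * 18^d"
      by (simp add: power_mult power_add power_mult_distrib[symmetric])
    also have "\<dots> \<le> 32 * 32^d" by (intro mult_mono power_mono) auto
    finally show "real d*3^(2*d+1) \<le> 32^(d+1)" by simp
  qed (use b1 in auto)
  finally show ?thesis unfolding \<beta>_def[symmetric] bp by (simp add: mult_ac)
qed

lemma ind_helper:
  fixes lam C :: real
  assumes "0 < lam" "0 \<le> C"
  shows "ennreal (2*lam) * (ennreal (C/lam^3) * indicator A lam) = ennreal (2*C) * (indicator A lam * ennreal (1/lam^2))"
proof -
  have h: "2*lam*(C/lam^3) = 2*C*(1/lam^2)" using assms by (simp add: power3_eq_cube power2_eq_square field_simps)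
  have "ennreal (2*lam) * ennreal (C/lam^3) = ennreal (2*lam*(C/lam^3))"
    using assms by (intro ennreal_mult[symmetric]) auto
  also have "\<dots> = ennreal (2*C*(1/lam^2))" using h by simp
  also have "\<dots> = ennreal (2*C) * ennreal (1/lam^2)" using assms by (intro ennreal_mult) auto
  finally have e: "ennreal (2*lam) * ennreal (C/lam^3) = ennreal (2*C) * ennreal (1/lam^2)" .
  show ?thesis by (cases "lam \<in> A") (simp_all add: e)
qed

theorem theorem5p5:
  fixes \<mu> :: "'a::euclidean_space measure"
    and \<delta> \<alpha> s :: real and N :: nat
  assumes "\<delta> > 0"
    and "prob_space \<mu>" and "sets \<mu> = sets borel"
    and "AE x in \<mu>. norm x = 1"
    and "\<alpha> \<ge> 1" and "s > 0"
    and "\<And>x t. norm x = 1 \<Longrightarrow> 0 \<le> t \<Longrightarrow> t \<le> 1 \<Longrightarrow>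
           measure \<mu> {\<phi>. \<bar>inner x \<phi>\<bar> \<le> t} \<le> \<alpha> * t powr s"
    and "real N \<ge> (real DIM('a) + 2) / s"
  shows "(\<integral>\<^sup>+ \<omega>. (worst_case_error N \<delta> (\<lambda>n. fst (\<omega> n)) (\<lambda>n. snd (\<omega> n)))\<^sup>2 \<partial>cr_joint \<mu> \<delta> N)
    \<le> ennreal (10^5 * \<delta>^2 * (real DIM('a))^2 * (2*\<alpha>) powr (2/s) * (ln (16 * (2*\<alpha>) powr (1/s)))^2
                / ((real N + 1) * (real N + 2))
              + \<delta>^2 * 32 ^ (DIM('a) + 1) * (2*\<alpha>) powr ((real DIM('a) + 1) / s) * (1/2) ^ N)"
proof -
  note dl = assms(1) and pm = assms(2) and sm = assms(3) and ae = assms(4)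
    and al = assms(5) and s = assms(6) and hyp = assms(7) and Nhyp = assms(8)
  define d where "d = DIM('a)"
  define D where "D = real d"
  have d1: "d \<ge> 1" by (simp add: d_def DIM_positive Suc_leI)
  have D1: "D \<ge> 1" using d1 by (simp add: D_def)
  define \<beta> where "\<beta> = (2*\<alpha>) powr (1/s)"
  have b1: "\<beta> \<ge> 1" unfolding \<beta>_def using al s by (intro ge_one_powr_ge_zero) auto
  have bs: "\<beta> powr s = 2*\<alpha>" unfolding \<beta>_def using al s by (simp add: powr_powr)
  define t0 where "t0 = 1/\<beta>"
  have t0: "0 < t0" "t0 \<le> 1" using b1 by (auto simp: t0_def)
  have t0s: "\<alpha> * t0 powr s = 1/2"
    using b1 bs al by (simp add: t0_def powr_divide)
  have half: "measure \<mu> {\<phi>. \<bar>inner x \<phi>\<bar> \<le> t0} \<le> 1/2" if "norm x = 1" for x :: 'a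
    using hyp[OF that less_imp_le[OF t0(1)] t0(2)] t0s by simp
  have sN: "real N * s \<ge> D + 2"
    using Nhyp s by (simp add: D_def d_def pos_divide_le_eq)
  have N1: "N \<ge> 1"
  proof -
    have "real N * s > 0" using sN D1 by linarith
    then have "real N > 0" using s by (simp add: zero_less_mult_iff)
    then show ?thesis by simp
  qed
  define L where "L = \<delta>*\<beta>"
  have Lp: "L > 0" using dl b1 by (simp add: L_def)
  define M1 where "M1 = 2*D*(1+4*\<beta>)^(d-1)"
  have M1: "M1 \<ge> 1"
  proof -
    have "1 \<le> (1+4*\<beta>)^(d-1)" using b1 by (intro one_le_power) auto
    moreover have "1 \<le> 2*D" using D1 by simp
    ultimately show ?thesis unfolding M1_def by (metis mult_mono' mult_1 zero_le_one order.trans)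
  qed
  define K where "K = ln M1 + 1"
  have K1: "K \<ge> 1" using M1 by (simp add: K_def)
  define a where "a = real N/(8*\<delta>*\<beta>)"
  have ap: "a > 0" using N1 dl b1 by (simp add: a_def)
  define b where "b = 2*K/a"
  have bp: "b > 0" using K1 ap by (simp add: b_def)
  define C1 where "C1 = 216/a^3"
  define C2 where "C2 = 2*D*3^(2*d+1)*\<beta>^(d+2)*\<delta>^3*(1/2)^N"
  have C1p: "C1 \<ge> 0" using ap by (simp add: C1_def)
  have C2p: "C2 \<ge> 0" using dl b1 by (simp add: C2_def D_def)
  define f where "f = (\<lambda>lam::real. ennreal (if lam \<le> b then 1 else 0)
      + ennreal (C1/lam^3) * indicator {b..} lam + ennreal (C2/lam^3) * indicator {4*L..} lam)"
  define Q where "Q = cr_joint \<mu> \<delta> N"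
  define W where "W = (\<lambda>\<omega>::nat \<Rightarrow> 'a \<times> real. worst_case_error N \<delta> (\<lambda>n. fst (\<omega> n)) (\<lambda>n. snd (\<omega> n)))"
  interpret U: prob_space "uniform_measure lborel {-\<delta>..\<delta>}" using dl by (intro prob_space_uniform_measure) auto
  interpret \<mu>: prob_space \<mu> by fact
  interpret Q: prob_space Q unfolding Q_def cr_joint_def
    by (rule prob_space_PiM, rule prob_space_pair) unfold_locales
  have bound: "\<exists>E\<in>sets Q. {\<omega>\<in>space Q. ennreal lam < W \<omega>} \<subseteq> E \<and> emeasure Q E \<le> f lam"
    if lp: "lam > 0" for lam
  proof (cases "lam \<le> b")
    case True
    have "emeasure Q (space Q) \<le> f lam" using True by (simp add: f_def Q.emeasure_space_1)
    then show ?thesis by blast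
  next
    case False
    show ?thesis
    proof (cases "lam < 4*L")
      case True
      define c where "c = lam*t0/2"
      define q where "q = 1 - lam*t0/(8*\<delta>)"
      have lt: "lam * t0 < 4*\<delta>" using True b1 dl by (simp add: L_def t0_def field_simps)
      have c: "c > 0" "c / lam \<le> 1" using lp t0 by (auto simp: c_def)
      have q: "q \<ge> 0" using lt dl by (simp add: q_def field_simps)
      have qb: "emeasure (\<mu> \<Otimes>\<^sub>M uniform_measure lborel {-\<delta>..\<delta>})
           {p. \<bar>lam * inner x (fst p) - snd p\<bar> \<le> \<delta> + c * norm (fst p)} \<le> ennreal q"
        if "norm x = 1" for x :: 'a
        unfolding c_def q_def
        by (rule sample_small[OF pm sm dl ae lp t0(1) half[OF that]]) (use lt in simp)
      obtain E where E: "E \<in> sets Q" "{\<omega>\<in>space Q. ennreal lam < W \<omega>} \<subseteq> E"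
        "emeasure Q E \<le> ennreal (2 * real DIM('a) * (1 + 2/(c/lam))^(DIM('a)-1) * q^N)"
        using tail_bound[OF pm sm dl lp c q qb, of N] unfolding Q_def W_def by blast
      have "2 * real DIM('a) * (1 + 2/(c/lam))^(DIM('a)-1) = M1"
        using lp b1 by (simp add: M1_def D_def d_def c_def t0_def)
      then have E3: "emeasure Q E \<le> ennreal (M1 * q^N)" using E(3) by simp
      have "q^N \<le> exp (-(real N * (lam*t0/(8*\<delta>))))"
        unfolding q_def using lt lp t0 dl by (intro q_pow_exp) auto
      also have "real N * (lam*t0/(8*\<delta>)) = a * lam" by (simp add: a_def t0_def)
      finally have qN: "q^N \<le> exp (-(a*lam))" .
      have "M1 * q^N \<le> 216 / (a^3 * lam^3)"
        using False by (intro small_tail_real[OF M1 ap _ q qN]) (simp add: b_def K_def)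
      also have "\<dots> = C1/lam^3" by (simp add: C1_def)
      finally have "ennreal (M1 * q^N) \<le> ennreal (C1/lam^3)" by (rule ennreal_leI)
      also have "\<dots> \<le> f lam" using False by (simp add: f_def)
      finally have Mf: "ennreal (M1 * q^N) \<le> f lam" .
      show ?thesis using E(1,2) order.trans[OF E3 Mf] by blast
    next
      case big: False
      define q where "q = \<alpha> * (3*\<delta>/lam) powr s"
      have lam4: "lam \<ge> 4*L" using big by simp
      have "\<delta> \<le> \<delta>*\<beta>" using b1 dl by simp
      then have l3: "3*\<delta> \<le> lam" using lam4 dl unfolding L_def by linarith
      have r1: "3*\<delta>/lam \<le> 1" using l3 lp by (simp add: divide_le_eq)
      have c: "\<delta> > 0" "\<delta> / lam \<le> 1" using dl r1 lp by (auto simp: divide_le_eq)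
      have q: "q \<ge> 0" using al by (simp add: q_def)
      have qb: "emeasure (\<mu> \<Otimes>\<^sub>M uniform_measure lborel {-\<delta>..\<delta>})
           {p. \<bar>lam * inner x (fst p) - snd p\<bar> \<le> \<delta> + \<delta> * norm (fst p)} \<le> ennreal q"
        if "norm x = 1" for x :: 'a
      proof -
        have "emeasure (\<mu> \<Otimes>\<^sub>M uniform_measure lborel {-\<delta>..\<delta>})
           {p. \<bar>lam * inner x (fst p) - snd p\<bar> \<le> \<delta> + \<delta> * norm (fst p)}
           \<le> emeasure \<mu> {\<phi>. \<bar>inner x \<phi>\<bar> \<le> 3*\<delta>/lam}"
          by (rule sample_large[OF pm sm dl ae lp])
        also have "\<dots> = ennreal (measure \<mu> {\<phi>. \<bar>inner x \<phi>\<bar> \<le> 3*\<delta>/lam})"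
          by (simp add: \<mu>.emeasure_eq_measure)
        also have "\<dots> \<le> ennreal q" unfolding q_def
          using hyp[OF that _ r1] dl lp by (intro ennreal_leI) simp
        finally show ?thesis .
      qed
      obtain E where E: "E \<in> sets Q" "{\<omega>\<in>space Q. ennreal lam < W \<omega>} \<subseteq> E"
        "emeasure Q E \<le> ennreal (2 * real DIM('a) * (1 + 2/(\<delta>/lam))^(DIM('a)-1) * q^N)"
        using tail_bound[OF pm sm dl lp c q qb, of N] unfolding Q_def W_def by blast
      have "2 * real DIM('a) * (1 + 2/(\<delta>/lam))^(DIM('a)-1) * q^N \<le> C2/lam^3"
        unfolding q_def C2_def D_def d_def \<beta>_def
        by (rule large_real[OF dl al s _ _ ]) (use d1 sN lam4 in \<open>auto simp: d_def D_def L_def \<beta>_def\<close>)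
      then have "emeasure Q E \<le> ennreal (C2/lam^3)" using E(3) by (metis ennreal_leI order.trans)
      also have "\<dots> \<le> f lam" using lam4 by (simp add: f_def)
      finally show ?thesis using E by blast
    qed
  qed
  have "(\<integral>\<^sup>+ \<omega>. (W \<omega>)^2 \<partial>Q) \<le> (\<integral>\<^sup>+ lam. indicator {0<..} lam * (ennreal (2*lam) * f lam) \<partial>lborel)"
    by (rule outer_layer_cake) (use bound Q.finite_measure_axioms in auto)
  also have "\<dots> \<le> (\<integral>\<^sup>+ lam. indicator {0..b} lam * ennreal (2*lam)
       + ennreal (2*C1) * (indicator {b..} lam * ennreal (1/lam^2))
       + ennreal (2*C2) * (indicator {4*L..} lam * ennreal (1/lam^2)) \<partial>lborel)"
  proof (intro nn_integral_mono)
    fix lam :: real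
    show "indicator {0<..} lam * (ennreal (2*lam) * f lam) \<le> indicator {0..b} lam * ennreal (2*lam)
       + ennreal (2*C1) * (indicator {b..} lam * ennreal (1/lam^2))
       + ennreal (2*C2) * (indicator {4*L..} lam * ennreal (1/lam^2))"
    proof (cases "lam > 0")
      case False then show ?thesis by simp
    next
      case True
      have e1: "ennreal (2*lam) * ennreal (if lam \<le> b then 1 else 0) = indicator {0..b} lam * ennreal (2*lam)"
        using True by (simp add: indicator_def)
      have "indicator {0<..} lam * (ennreal (2*lam) * f lam) = ennreal (2*lam) * f lam"
        using True by simp
      also have "\<dots> = ennreal (2*lam) * ennreal (if lam \<le> b then 1 else 0)
          + ennreal (2*lam) * (ennreal (C1/lam^3) * indicator {b..} lam)
          + ennreal (2*lam) * (ennreal (C2/lam^3) * indicator {4*L..} lam)"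
        unfolding f_def by (simp only: distrib_left)
      also have "\<dots> = indicator {0..b} lam * ennreal (2*lam)
       + ennreal (2*C1) * (indicator {b..} lam * ennreal (1/lam^2))
       + ennreal (2*C2) * (indicator {4*L..} lam * ennreal (1/lam^2))"
        unfolding e1 ind_helper[OF True C1p] ind_helper[OF True C2p] ..
      finally show ?thesis by simp
    qed
  qed
  also have "\<dots> = ennreal (b^2) + ennreal (2*C1) * ennreal (1/b) + ennreal (2*C2) * ennreal (1/(4*L))"
  proof -
    have m1: "(\<lambda>lam. indicator {0..b} lam * ennreal (2*lam)) \<in> borel_measurable lborel" by measurable
    have m2: "(\<lambda>lam. indicator {b..} lam * ennreal (1/lam^2)) \<in> borel_measurable lborel" by measurable
    have m3: "(\<lambda>lam. indicator {4*L..} lam * ennreal (1/lam^2)) \<in> borel_measurable lborel" by measurable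
    have "(\<integral>\<^sup>+ lam. indicator {0..b} lam * ennreal (2*lam)
       + ennreal (2*C1) * (indicator {b..} lam * ennreal (1/lam^2))
       + ennreal (2*C2) * (indicator {4*L..} lam * ennreal (1/lam^2)) \<partial>lborel)
      = (\<integral>\<^sup>+ lam. indicator {0..b} lam * ennreal (2*lam) \<partial>lborel)
       + ennreal (2*C1) * (\<integral>\<^sup>+ lam. indicator {b..} lam * ennreal (1/lam^2) \<partial>lborel)
       + ennreal (2*C2) * (\<integral>\<^sup>+ lam. indicator {4*L..} lam * ennreal (1/lam^2) \<partial>lborel)"
      using m1 m2 m3 by (simp add: nn_integral_add nn_integral_cmult)
    also have "\<dots> = ennreal (b^2) + ennreal (2*C1) * ennreal (1/b) + ennreal (2*C2) * ennreal (1/(4*L))"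
      using bp Lp by (simp add: integral_2x integral_inv_sq)
    finally show ?thesis .
  qed
  also have "\<dots> \<le> ennreal (10^5 * \<delta>^2 * (real DIM('a))^2 * (2*\<alpha>) powr (2/s) * (ln (16 * (2*\<alpha>) powr (1/s)))^2
                / ((real N + 1) * (real N + 2))
              + \<delta>^2 * 32 ^ (DIM('a) + 1) * (2*\<alpha>) powr ((real DIM('a) + 1) / s) * (1/2) ^ N)"
  proof -
    have KB: "K \<le> 2 * D * ln (16*\<beta>)" unfolding K_def M1_def D_def by (rule K_bound[OF b1 d1])
    have T1: "b^2 + 2*C1*(1/b) \<le> 10^5 * \<delta>^2 * D^2 * \<beta>^2 * (ln (16*\<beta>))^2 / ((real N + 1) * (real N + 2))"
      using small_total[OF dl b1 D1 N1 K1 KB] unfolding b_def C1_def a_def by simp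
    have T2: "2*C2*(1/(4*L)) \<le> \<delta>^2 * 32^(d+1) * (2*\<alpha>) powr ((real d + 1)/s) * (1/2)^N"
      using large_final[OF dl al s, of d N] unfolding C2_def L_def D_def \<beta>_def by (simp add: mult.assoc)
    have b2: "\<beta>^2 = (2*\<alpha>) powr (2/s)"
    proof -
      have "\<beta>^2 = \<beta> powr (real 2)" using b1 by (subst powr_realpow) auto
      also have "\<dots> = (2*\<alpha>) powr (1/s * real 2)" unfolding \<beta>_def by (simp add: powr_powr)
      finally show ?thesis by simp
    qed
    have "ennreal (b^2) + ennreal (2*C1) * ennreal (1/b) + ennreal (2*C2) * ennreal (1/(4*L))
        = ennreal (b^2 + 2*C1*(1/b) + 2*C2*(1/(4*L)))"
    proof -
      have x1: "ennreal (2*C1) * ennreal (1/b) = ennreal (2*C1*(1/b))"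
        using bp C1p by (intro ennreal_mult[symmetric]) auto
      have x2: "ennreal (2*C2) * ennreal (1/(4*L)) = ennreal (2*C2*(1/(4*L)))"
        using Lp C2p by (intro ennreal_mult[symmetric]) auto
      have p1: "0 \<le> 2*C1*(1/b)" using bp C1p by simp
      have p2: "0 \<le> 2*C2*(1/(4*L))" using Lp C2p by simp
      have y1: "ennreal (b^2 + 2*C1*(1/b) + 2*C2*(1/(4*L))) = ennreal (b^2 + 2*C1*(1/b)) + ennreal (2*C2*(1/(4*L)))"
        using p1 p2 by (intro ennreal_plus) auto
      have y2: "ennreal (b^2 + 2*C1*(1/b)) = ennreal (b^2) + ennreal (2*C1*(1/b))"
        using p1 by (intro ennreal_plus) auto
      show ?thesis unfolding x1 x2 y1 y2 ..
    qed
    also have "\<dots> \<le> ennreal (10^5 * \<delta>^2 * D^2 * \<beta>^2 * (ln (16*\<beta>))^2 / ((real N + 1) * (real N + 2))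
          + \<delta>^2 * 32^(d+1) * (2*\<alpha>) powr ((real d + 1)/s) * (1/2)^N)"
      using T1 T2 by (intro ennreal_leI) linarith
    finally show ?thesis unfolding b2 by (simp add: D_def d_def \<beta>_def)
  qed
  finally show ?thesis by (simp add: Q_def W_def)
qed

end
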